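(* Let $\lambda,\mu$ be partitions and $x$ an indeterminate. Put $$X_{\lambda\mu}(x):=\prod_{(i,j)\in[\mu]}(j-i-x)\prod_{(i,j)\in [\lambda]}\biggl((j-i-\mu_1+x)\prod_{1\le k\le\mu_1}\frac{j-i+\bar{\mu}_k-k+1+x}{j-i+\bar{\mu}_k-k+x}\biggr)$$ and $$Z_{\lambda\mu}(x):=\prod_{(i,j) \in [\lambda]}(h_{i,j}^{\lambda,\mu}+x)\prod_{(i,j) \in [\mu]}(h_{i,j}^{\mu,\lambda}-x).$$ Then $X_{\lambda\mu}(x)=Z_{\lambda\mu}(x)$.
   Context: For a partition $\lambda$, $[\lambda]=\{(i,j): i\ge1,\ 1\le j\le\lambda_i\}$ is its diagram and $\bar\lambda$ is the conjugate partition ($\bar\lambda_k$ = number of $i$ with $\lambda_i\ge k$). For partitions $\lambda,\mu$ and a node $(i,j)\in[\lambda]$, the generalized hook length is $h^{\lambda,\mu}_{i,j}=\lambda_i-i+\bar\mu_j-j+1$. *)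

theory Defs
  imports "HOL-Computational_Algebra.Polynomial" "HOL-Computational_Algebra.Fraction_Field"
begin

definition is_partition :: "nat list \<Rightarrow> bool" where
  "is_partition l \<longleftrightarrow> sorted_wrt (\<ge>) l \<and> 0 \<notin> set l"

(* part l i = lambda_i (1-indexed), 0 beyond the length *)
definition part :: "nat list \<Rightarrow> nat \<Rightarrow> nat" where
  "part l i = (if 1 \<le> i \<and> i \<le> length l then l ! (i - 1) else 0)"

definition conjp :: "nat list \<Rightarrow> nat \<Rightarrow> nat" where
  "conjp l k = card {i. 1 \<le> i \<and> part l i \<ge> k}"

definition diagram :: "nat list \<Rightarrow> (nat \<times> nat) set" where
  "diagram l = {(i, j). 1 \<le> i \<and> 1 \<le> j \<and> j \<le> part l i}"

definition ghook :: "nat list \<Rightarrow> nat list \<Rightarrow> nat \<Rightarrow> nat \<Rightarrow> int" where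
  "ghook l m i j = int (part l i) - int i + int (conjp m j) - int j + 1"

definition indet :: "rat poly fract" where
  "indet = Fract [:0, 1:] 1"

end

theory Submission
  imports Defs
begin

lemma fract_of_int: "(of_int m :: 'a::idom fract) = Fract (of_int m) 1"
proof (cases "m \<ge> 0")
  case True
  then obtain n where "m = int n" by (metis nonneg_int_cases)
  thus ?thesis by (simp add: of_nat_fract)
next
  case False
  then obtain n where "m = - int n" by (metis add.inverse_inverse neg_0_le_iff_le nonneg_int_cases linorder_linear)
  thus ?thesis by (simp add: of_nat_fract)
qed

definition E :: "int \<Rightarrow> rat poly fract" where "E m = of_int m + indet"
definition E' :: "int \<Rightarrow> rat poly fract" where "E' m = of_int m - indet"

lemma E_nz: "E m \<noteq> 0"
proof
  assume "E m = 0"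
  hence "Fract (of_int m + [:0,1:]) 1 = (Fract 0 1 :: rat poly fract)"
    by (simp add: E_def indet_def fract_of_int Zero_fract_def)
  hence "[:0,1:] + (of_int m :: rat poly) = 0" by (simp add: eq_fract add.commute)
  hence "coeff ([:0,1:] + (of_int m :: rat poly)) 1 = 0" by simp
  thus False by (simp add: of_int_poly)
qed

lemma E'_nz: "E' m \<noteq> 0"
proof
  assume "E' m = 0"
  hence "Fract (of_int m - [:0,1:]) 1 = (Fract 0 1 :: rat poly fract)"
    by (simp add: E'_def indet_def fract_of_int Zero_fract_def)
  hence "(of_int m :: rat poly) - [:0,1:] = 0" by (simp add: eq_fract)
  hence "coeff ((of_int m :: rat poly) - [:0,1:]) 1 = 0" by simp
  thus False by (simp add: of_int_poly)
qed


lemma part_mono: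
  assumes "sorted_wrt (\<ge>) l" "1 \<le> i" "i \<le> i'"
  shows "part l i' \<le> part l i"
proof (cases "i' \<le> length l")
  case True
  show ?thesis
  proof (cases "i = i'")
    case False
    hence "i - 1 < i' - 1" "i' - 1 < length l" using assms True by auto
    hence "l ! (i' - 1) \<le> l ! (i - 1)" using assms(1) by (simp add: sorted_wrt_iff_nth_less)
    thus ?thesis using assms True by (simp add: part_def)
  qed simp
qed (simp add: part_def)

lemma part_le_sum: "part l i \<le> sum_list l"
  by (auto simp: part_def intro!: member_le_sum_list)

lemma part_pos_len: "0 < part l i \<Longrightarrow> 1 \<le> i \<and> i \<le> length l"
  by (simp add: part_def split: if_splits)

lemma finite_diagram: "finite (diagram l)"
proof -
  have "diagram l \<subseteq> {1..length l} \<times> {1..sum_list l}"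
  proof
    fix x assume "x \<in> diagram l"
    then obtain i j where x: "x = (i,j)" "1 \<le> i" "1 \<le> j" "j \<le> part l i" by (auto simp: diagram_def)
    have "j \<le> sum_list l" using x part_le_sum[of l i] by linarith
    moreover have "i \<le> length l" using x part_pos_len[of l i] by linarith
    ultimately show "x \<in> {1..length l} \<times> {1..sum_list l}" using x by auto
  qed
  thus ?thesis by (rule finite_subset) auto
qed

lemma conj_set_fin: "1 \<le> k \<Longrightarrow> finite {i. 1 \<le> i \<and> k \<le> part l i}"
  by (rule finite_subset[of _ "{1..length l}"]) (use part_pos_len in fastforce)+

lemma down_closed:
  assumes "finite S" "\<And>i. i \<in> S \<Longrightarrow> 1 \<le> i" "\<And>i i'. i \<in> S \<Longrightarrow> 1 \<le> i' \<Longrightarrow> i' \<le> i \<Longrightarrow> i' \<in> S"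
  shows "S = {1..card S}"
proof (cases "S = {}")
  case False
  define M where "M = Max S"
  have "M \<in> S" using assms False by (simp add: M_def)
  have "S = {1..M}"
  proof
    show "S \<subseteq> {1..M}" using assms(1,2) by (auto simp: M_def)
    show "{1..M} \<subseteq> S" using assms(3) \<open>M \<in> S\<close> by auto
  qed
  thus ?thesis by simp
qed simp

lemma conj_set_eq:
  assumes "sorted_wrt (\<ge>) l" "1 \<le> k"
  shows "{i. 1 \<le> i \<and> k \<le> part l i} = {1..conjp l k}"
proof -
  have "{i. 1 \<le> i \<and> k \<le> part l i} = {1..card {i. 1 \<le> i \<and> k \<le> part l i}}"
    apply (rule down_closed)
    using conj_set_fin[OF assms(2)] apply simp
     apply simp
  proof -
    fix i i' assume "i \<in> {i. 1 \<le> i \<and> k \<le> part l i}" "1 \<le> i'" "i' \<le> i"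
    thus "i' \<in> {i. 1 \<le> i \<and> k \<le> part l i}" using part_mono[OF assms(1), of i' i] by auto
  qed
  thus ?thesis by (simp add: conjp_def)
qed

lemma conj_iff:
  assumes "sorted_wrt (\<ge>) l" "1 \<le> k" "1 \<le> i"
  shows "i \<le> conjp l k \<longleftrightarrow> k \<le> part l i"
proof -
  have "i \<in> {i. 1 \<le> i \<and> k \<le> part l i} \<longleftrightarrow> i \<in> {1..conjp l k}" using conj_set_eq[OF assms(1,2)] by simp
  thus ?thesis using assms(3) by simp
qed

lemma conj_anti:
  assumes "1 \<le> k" "k \<le> k'"
  shows "conjp l k' \<le> conjp l k"
  unfolding conjp_def using assms by (intro card_mono conj_set_fin) auto

lemma conj_big:
  assumes "sorted_wrt (\<ge>) l"
  shows "conjp l (part l 1 + 1) = 0"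
proof -
  have h: "{i. 1 \<le> i \<and> part l 1 + 1 \<le> part l i} = {}"
    using part_mono[OF assms, of 1] by fastforce
  show ?thesis unfolding conjp_def h by simp
qed

lemma conj_nil: "conjp [] k = 0"
proof (cases "k = 0")
  case True
  have "{i. 1 \<le> i \<and> k \<le> part [] i} = {1..}" using True by auto
  thus ?thesis unfolding conjp_def by (simp add: infinite_Ici)
qed (simp add: conjp_def part_def)



lemma tele:
  fixes f :: "nat \<Rightarrow> 'a::field"
  assumes "\<And>i. f i \<noteq> 0" "p \<le> q"
  shows "(\<Prod>i\<in>{p<..q}. f (i - 1) / f i) = f p / f q"
  using assms(2)
proof (induction q)
  case 0 thus ?case using assms(1) by simp
next
  case (Suc q)
  show ?case
  proof (cases "p = Suc q")
    case True thus ?thesis using assms(1) by simp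
  next
    case False
    hence "p \<le> q" using Suc by simp
    have "{p<..Suc q} = insert (Suc q) {p<..q}" using \<open>p \<le> q\<close> by auto
    hence "(\<Prod>i\<in>{p<..Suc q}. f (i - 1) / f i) = f q / f (Suc q) * (f p / f q)"
      using Suc.IH[OF \<open>p \<le> q\<close>] by simp
    thus ?thesis using assms(1) by (simp add: field_simps)
  qed
qed

lemma prod_change:
  fixes f g :: "'b \<Rightarrow> 'a::field"
  assumes "finite D" "S \<subseteq> D" "\<And>x. x \<in> D - S \<Longrightarrow> g x = f x" "\<And>x. x \<in> S \<Longrightarrow> f x \<noteq> 0"
  shows "prod g D = prod f D * prod (\<lambda>x. g x / f x) S"
proof -
  have fS: "finite S" using assms(1,2) finite_subset by blast
  have "prod g D = prod g (D - S) * prod g S" using assms(1,2) by (metis prod.subset_diff)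
  moreover have "prod f D = prod f (D - S) * prod f S" using assms(1,2) by (metis prod.subset_diff)
  moreover have "prod g (D - S) = prod f (D - S)" using assms(3) by (rule prod.cong[OF refl])
  moreover have "prod g S = prod f S * prod (\<lambda>x. g x / f x) S"
    using assms(4) by (simp add: prod.distrib[symmetric] cong: prod.cong)
  ultimately show ?thesis by (simp add: mult.assoc)
qed

lemma E'_neg: "E' m = - E (- m)"
  by (simp add: E_def E'_def)

definition Qf :: "nat list \<Rightarrow> int \<Rightarrow> nat \<Rightarrow> rat poly fract" where
  "Qf mu c L = E (c + (int (conjp mu L) - int L) + 1) *
     (\<Prod>j\<in>{1..<L}. E (c + (int (conjp mu j) - int j) + 1) / E (c + (int (conjp mu j) - int j))) *
     (\<Prod>i\<in>{1..conjp mu L}. E' ((int (part mu i) - int i) - c + 1) / E' ((int (part mu i) - int i) - c))"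

lemma Qf_step:
  assumes mu: "sorted_wrt (\<ge>) mu" and L: "1 \<le> L"
  shows "Qf mu c (Suc L) = Qf mu c L"
proof -
  define p where "p = conjp mu (Suc L)"
  define q where "q = conjp mu L"
  have pq: "p \<le> q" unfolding p_def q_def using conj_anti[OF L] by simp
  define g where "g i = E (c + int i - int L)" for i :: nat
  have gnz: "\<And>i. g i \<noteq> 0" by (simp add: g_def E_nz)
  have partL: "part mu i = L" if "i \<in> {p<..q}" for i
  proof -
    have i1: "1 \<le> i" using that by auto
    have "L \<le> part mu i" using conj_iff[OF mu L i1] that q_def by auto
    moreover have "\<not> Suc L \<le> part mu i" using conj_iff[OF mu _ i1, of "Suc L"] that p_def by auto
    ultimately show ?thesis by simp
  qed
  define S where "S i = E' ((int (part mu i) - int i) - c + 1) / E' ((int (part mu i) - int i) - c)" for i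
  have "(\<Prod>i\<in>{p<..q}. S i) = (\<Prod>i\<in>{p<..q}. g (i - 1) / g i)"
  proof (rule prod.cong[OF refl])
    fix i assume i: "i \<in> {p<..q}"
    have "S i = E' (int L - int i - c + 1) / E' (int L - int i - c)" using partL[OF i] by (simp add: S_def)
    also have "\<dots> = g (i - 1) / g i" using i
      by (simp add: E'_neg g_def of_nat_diff algebra_simps)
    finally show "S i = g (i - 1) / g i" .
  qed
  also have "\<dots> = g p / g q" by (rule tele[OF gnz pq])
  finally have tel: "(\<Prod>i\<in>{p<..q}. S i) = g p / g q" .
  have split: "{1..q} = {1..p} \<union> {p<..q}" using pq by auto
  have "(\<Prod>i\<in>{1..q}. S i) = (\<Prod>i\<in>{1..p}. S i) * (\<Prod>i\<in>{p<..q}. S i)"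
    unfolding split by (rule prod.union_disjoint) auto
  hence Sq: "(\<Prod>i\<in>{1..q}. S i) = (\<Prod>i\<in>{1..p}. S i) * (g p / g q)" using tel by simp
  define R where "R j = E (c + (int (conjp mu j) - int j) + 1) / E (c + (int (conjp mu j) - int j))" for j
  have RL: "(\<Prod>j\<in>{1..<Suc L}. R j) = (\<Prod>j\<in>{1..<L}. R j) * R L"
    using L by (simp add: prod.atLeastLessThan_Suc)
  have "Qf mu c (Suc L) = E (c + (int p - int (Suc L)) + 1) * (\<Prod>j\<in>{1..<Suc L}. R j) * (\<Prod>i\<in>{1..p}. S i)"
    unfolding Qf_def p_def R_def S_def ..
  hence "Qf mu c (Suc L) = E (c + (int p - int (Suc L)) + 1) * ((\<Prod>j\<in>{1..<L}. R j) * R L) * (\<Prod>i\<in>{1..p}. S i)"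
    unfolding RL .
  moreover have "Qf mu c L = E (c + (int q - int L) + 1) * (\<Prod>j\<in>{1..<L}. R j) * (\<Prod>i\<in>{1..q}. S i)"
    unfolding Qf_def q_def R_def S_def ..
  hence "Qf mu c L = E (c + (int q - int L) + 1) * (\<Prod>j\<in>{1..<L}. R j) * ((\<Prod>i\<in>{1..p}. S i) * (g p / g q))"
    unfolding Sq .
  moreover have "R L = E (c + int q - int L + 1) / g q" by (simp add: R_def g_def q_def algebra_simps)
  moreover have "E (c + (int p - int (Suc L)) + 1) = g p" by (simp add: g_def algebra_simps)
  moreover have "E (c + (int q - int L) + 1) = E (c + int q - int L + 1)" by (simp add: algebra_simps)
  ultimately have "g q * Qf mu c (Suc L) = g q * Qf mu c L" using gnz[of q] by (simp add: field_simps)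
  thus ?thesis using gnz[of q] by simp
qed

lemma Qf_const:
  assumes mu: "sorted_wrt (\<ge>) mu" and L: "1 \<le> L"
  shows "Qf mu c L = Qf mu c 1"
  using L
proof (induction L)
  case (Suc L)
  show ?case
  proof (cases "L = 0")
    case False thus ?thesis using Suc Qf_step[OF mu, of L c] by simp
  qed simp
qed simp

definition Gf :: "nat list \<Rightarrow> int \<Rightarrow> rat poly fract" where
  "Gf mu c = (of_int (c - int (part mu 1)) + indet) *
            (\<Prod>k\<in>{1..part mu 1}.
               ((of_int (c + int (conjp mu k) - int k + 1) :: rat poly fract) + indet) /
               ((of_int (c + int (conjp mu k) - int k) :: rat poly fract) + indet))"

lemma Gf_Qf:
  assumes mu: "sorted_wrt (\<ge>) mu" and L: "1 \<le> L"
  shows "Gf mu c = Qf mu c L"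
proof -
  have "Gf mu c = Qf mu c (part mu 1 + 1)"
    unfolding Gf_def Qf_def conj_big[OF mu]
    by (simp add: E_def algebra_simps atLeastLessThanSuc_atLeastAtMost)
  also have "\<dots> = Qf mu c 1" by (rule Qf_const[OF mu]) simp
  also have "\<dots> = Qf mu c L" by (rule Qf_const[OF mu L, symmetric])
  finally show ?thesis .
qed



definition Xm :: "nat list \<Rightarrow> rat poly fract" where
  "Xm mu = (\<Prod>(i, j)\<in>diagram mu. E' (int j - int i))"
definition Xl :: "nat list \<Rightarrow> nat list \<Rightarrow> rat poly fract" where
  "Xl mu lam = (\<Prod>(i, j)\<in>diagram lam. Gf mu (int j - int i))"
definition Zl :: "nat list \<Rightarrow> nat list \<Rightarrow> rat poly fract" where
  "Zl mu lam = (\<Prod>(i, j)\<in>diagram lam. E (ghook lam mu i j))"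
definition Zm :: "nat list \<Rightarrow> nat list \<Rightarrow> rat poly fract" where
  "Zm mu lam = (\<Prod>(i, j)\<in>diagram mu. E' (ghook mu lam i j))"

lemma cell_step:
  assumes mu: "sorted_wrt (\<ge>) mu" and sl: "sorted_wrt (\<ge>) (l0 @ [Suc L])"
    and IH: "Xm mu * Xl mu (l0 @ [L]) = Zl mu (l0 @ [L]) * Zm mu (l0 @ [L])"
  shows "Xm mu * Xl mu (l0 @ [Suc L]) = Zl mu (l0 @ [Suc L]) * Zm mu (l0 @ [Suc L])"
proof -
  define l where "l = l0 @ [L]"
  define l' where "l' = l0 @ [Suc L]"
  define n where "n = Suc (length l0)"
  have big: "\<And>x. x \<in> set l0 \<Longrightarrow> Suc L \<le> x" using sl by (simp add: sorted_wrt_append)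
  have p1: "part l' i = (if i = n then Suc L else part l i)" for i
    by (auto simp: part_def l_def l'_def n_def nth_append)
  have p2: "part l n = L" by (simp add: part_def l_def n_def)
  have p3: "Suc L \<le> part l i" if "1 \<le> i" "i < n" for i
  proof -
    have "i - 1 < length l0" using that by (simp add: n_def)
    hence "part l i = l0 ! (i - 1)" using that by (simp add: part_def l_def n_def nth_append)
    moreover have "l0 ! (i - 1) \<in> set l0" using that by (simp add: n_def)
    ultimately show ?thesis using big by simp
  qed
  have p4: "part l i = 0" if "n < i" for i using that by (simp add: part_def l_def n_def)
  have c1: "conjp l' k = conjp l k" if "k \<noteq> Suc L" for k
  proof -
    have "{i. 1 \<le> i \<and> k \<le> part l' i} = {i. 1 \<le> i \<and> k \<le> part l i}"
      using that p1 p2 by auto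
    thus ?thesis by (simp add: conjp_def)
  qed
  have c2: "conjp l (Suc L) = n - 1"
  proof -
    have e: "Suc L \<le> part l i \<longleftrightarrow> i < n" if "1 \<le> i" for i
      using p2 p3[OF that] p4 by (cases i n rule: linorder_cases) auto
    have "{i. 1 \<le> i \<and> Suc L \<le> part l i} = {1..n-1}"
      using e by (auto simp: n_def)
    thus ?thesis by (simp add: conjp_def)
  qed
  have c3: "conjp l' (Suc L) = n"
  proof -
    have e: "Suc L \<le> part l' i \<longleftrightarrow> i \<le> n" if "1 \<le> i" for i
      using p1 p3[OF that] p4 by (cases i n rule: linorder_cases) auto
    have "{i. 1 \<le> i \<and> Suc L \<le> part l' i} = {1..n}"
      using e by auto
    thus ?thesis by (simp add: conjp_def)
  qed
  have n1: "1 \<le> n" by (simp add: n_def)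
  have d1: "diagram l' = insert (n, Suc L) (diagram l)"
    using p1 p2 n1 by (auto simp: diagram_def split: if_splits)
  have d2: "(n, Suc L) \<notin> diagram l" using p2 by (simp add: diagram_def)
  define c where "c = int (Suc L) - int n"
  have X: "Xl mu l' = Gf mu c * Xl mu l"
    unfolding Xl_def d1 using d2 finite_diagram by (simp add: c_def)
  define R where "R j = E (c + (int (conjp mu j) - int j) + 1) / E (c + (int (conjp mu j) - int j))" for j
  have "(\<Prod>(i, j)\<in>diagram l. E (ghook l' mu i j)) = (\<Prod>(i, j)\<in>diagram l. E (ghook l mu i j)) *
      (\<Prod>x\<in>(\<lambda>j. (n, j)) ` {1..L}. (case x of (i, j) \<Rightarrow> E (ghook l' mu i j)) / (case x of (i, j) \<Rightarrow> E (ghook l mu i j)))"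
  proof (rule prod_change[OF finite_diagram])
    show "(\<lambda>j. (n, j)) ` {1..L} \<subseteq> diagram l" using p2 by (auto simp: diagram_def n_def)
    show "(case x of (i, j) \<Rightarrow> E (ghook l' mu i j)) = (case x of (i, j) \<Rightarrow> E (ghook l mu i j))"
      if "x \<in> diagram l - (\<lambda>j. (n, j)) ` {1..L}" for x
    proof -
      obtain i j where x: "x = (i, j)" by fastforce
      have "i \<noteq> n" using that p2 by (auto simp: x diagram_def)
      thus ?thesis by (simp add: x ghook_def p1)
    qed
  qed (auto simp: E_nz)
  also have "(\<Prod>x\<in>(\<lambda>j. (n, j)) ` {1..L}. (case x of (i, j) \<Rightarrow> E (ghook l' mu i j)) / (case x of (i, j) \<Rightarrow> E (ghook l mu i j)))
      = (\<Prod>j\<in>{1..L}. R j)"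
    by (subst prod.reindex) (auto simp: inj_on_def ghook_def p1 p2 R_def c_def algebra_simps intro!: prod.cong)
  finally have ZL1: "(\<Prod>(i, j)\<in>diagram l. E (ghook l' mu i j)) = Zl mu l * (\<Prod>j\<in>{1..L}. R j)"
    by (simp add: Zl_def)
  have ZL: "Zl mu l' = E (c + (int (conjp mu (Suc L)) - int (Suc L)) + 1) * (Zl mu l * (\<Prod>j\<in>{1..L}. R j))"
    unfolding Zl_def d1 using d2 finite_diagram ZL1[unfolded Zl_def]
    by (simp add: ghook_def p1 c_def algebra_simps)
  define S where "S i = E' ((int (part mu i) - int i) - c + 1) / E' ((int (part mu i) - int i) - c)" for i
  have "(\<Prod>(i, j)\<in>diagram mu. E' (ghook mu l' i j)) = (\<Prod>(i, j)\<in>diagram mu. E' (ghook mu l i j)) *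
      (\<Prod>x\<in>(\<lambda>i. (i, Suc L)) ` {1..conjp mu (Suc L)}. (case x of (i, j) \<Rightarrow> E' (ghook mu l' i j)) / (case x of (i, j) \<Rightarrow> E' (ghook mu l i j)))"
  proof (rule prod_change[OF finite_diagram])
    show "(\<lambda>i. (i, Suc L)) ` {1..conjp mu (Suc L)} \<subseteq> diagram mu"
      using conj_iff[OF mu] by (auto simp: diagram_def)
    show "(case x of (i, j) \<Rightarrow> E' (ghook mu l' i j)) = (case x of (i, j) \<Rightarrow> E' (ghook mu l i j))"
      if "x \<in> diagram mu - (\<lambda>i. (i, Suc L)) ` {1..conjp mu (Suc L)}" for x
    proof -
      obtain i j where x: "x = (i, j)" by fastforce
      have "j \<noteq> Suc L"
      proof
        assume j: "j = Suc L"
        have "1 \<le> i" "Suc L \<le> part mu i" using that by (auto simp: x diagram_def j)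
        hence "i \<le> conjp mu (Suc L)" using conj_iff[OF mu, of "Suc L" i] by simp
        thus False using that \<open>1 \<le> i\<close> by (auto simp: x j)
      qed
      thus ?thesis by (simp add: x ghook_def c1)
    qed
  qed (auto simp: E'_nz)
  also have "(\<Prod>x\<in>(\<lambda>i. (i, Suc L)) ` {1..conjp mu (Suc L)}. (case x of (i, j) \<Rightarrow> E' (ghook mu l' i j)) / (case x of (i, j) \<Rightarrow> E' (ghook mu l i j)))
      = (\<Prod>i\<in>{1..conjp mu (Suc L)}. S i)"
    by (subst prod.reindex) (auto simp: inj_on_def ghook_def c2 c3 S_def c_def n_def algebra_simps intro!: prod.cong)
  finally have ZM: "Zm mu l' = Zm mu l * (\<Prod>i\<in>{1..conjp mu (Suc L)}. S i)"
    by (simp add: Zm_def)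
  have G: "Gf mu c = E (c + (int (conjp mu (Suc L)) - int (Suc L)) + 1) * (\<Prod>j\<in>{1..L}. R j) * (\<Prod>i\<in>{1..conjp mu (Suc L)}. S i)"
  proof -
    have "Gf mu c = Qf mu c (Suc L)" by (rule Gf_Qf[OF mu]) simp
    also have "\<dots> = E (c + (int (conjp mu (Suc L)) - int (Suc L)) + 1) * (\<Prod>j\<in>{1..L}. R j) * (\<Prod>i\<in>{1..conjp mu (Suc L)}. S i)"
      unfolding Qf_def R_def S_def atLeastLessThanSuc_atLeastAtMost ..
    finally show ?thesis .
  qed
  have "Xm mu * Xl mu l' = Gf mu c * (Xm mu * Xl mu l)" using X by (simp add: ac_simps)
  also have "\<dots> = Gf mu c * (Zl mu l * Zm mu l)" using IH by (simp add: l_def)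
  also have "\<dots> = Zl mu l' * Zm mu l'" unfolding ZL ZM G by (simp add: ac_simps)
  finally show ?thesis by (simp add: l'_def)
qed



lemma diagram_nil: "diagram [] = {}"
  by (auto simp: diagram_def part_def)

lemma base_case:
  assumes mu: "sorted_wrt (\<ge>) mu"
  shows "Xm mu * Xl mu [] = Zl mu [] * Zm mu []"
proof -
  have "Zm mu [] = (\<Prod>(i, j)\<in>diagram mu. E' (int (part mu i) - int i - int j + 1))"
    unfolding Zm_def ghook_def conj_nil by simp
  also have "\<dots> = Xm mu"
    unfolding Xm_def
  proof (rule prod.reindex_bij_witness[where i = "\<lambda>(a, b). (a, part mu a + 1 - b)" and j = "\<lambda>(a, b). (a, part mu a + 1 - b)"])
    fix x assume "x \<in> diagram mu"
    then obtain a b where x: "x = (a, b)" "1 \<le> a" "1 \<le> b" "b \<le> part mu a" by (auto simp: diagram_def)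
    show "(case (case x of (a, b) \<Rightarrow> (a, part mu a + 1 - b)) of (a, b) \<Rightarrow> (a, part mu a + 1 - b)) = x"
      using x by auto
    show "(case x of (a, b) \<Rightarrow> (a, part mu a + 1 - b)) \<in> diagram mu"
      using x by (auto simp: diagram_def)
    show "(case (case x of (a, b) \<Rightarrow> (a, part mu a + 1 - b)) of (a, b) \<Rightarrow> (a, part mu a + 1 - b)) = x"
      using x by auto
    show "(case x of (a, b) \<Rightarrow> (a, part mu a + 1 - b)) \<in> diagram mu"
      using x by (auto simp: diagram_def)
    show "(case case x of (a, b) \<Rightarrow> (a, part mu a + 1 - b) of (i, j) \<Rightarrow> E' (int j - int i)) =
          (case x of (i, j) \<Rightarrow> E' (int (part mu i) - int i - int j + 1))"
      using x by (simp add: of_nat_diff algebra_simps)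
  qed
  finally show ?thesis by (simp add: Xl_def Zl_def diagram_nil)
qed

lemma zero_step:
  assumes "Xm mu * Xl mu l0 = Zl mu l0 * Zm mu l0"
  shows "Xm mu * Xl mu (l0 @ [0]) = Zl mu (l0 @ [0]) * Zm mu (l0 @ [0])"
proof -
  have peq: "part (l0 @ [0]) = part l0"
    by (rule ext) (auto simp: part_def nth_append)
  show ?thesis using assms unfolding Xl_def Zl_def Zm_def diagram_def ghook_def conjp_def peq .
qed

lemma main_sorted:
  assumes mu: "sorted_wrt (\<ge>) mu"
  shows "sorted_wrt (\<ge>) lam \<Longrightarrow> Xm mu * Xl mu lam = Zl mu lam * Zm mu lam"
proof (induction lam rule: rev_induct)
  case Nil thus ?case using base_case[OF mu] by simp
next
  case (snoc a l0)
  have s0: "sorted_wrt (\<ge>) l0" and big: "\<And>x. x \<in> set l0 \<Longrightarrow> a \<le> x"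
    using snoc.prems by (auto simp: sorted_wrt_append)
  have IH0: "Xm mu * Xl mu l0 = Zl mu l0 * Zm mu l0" using snoc.IH[OF s0] .
  have "L \<le> a \<Longrightarrow> Xm mu * Xl mu (l0 @ [L]) = Zl mu (l0 @ [L]) * Zm mu (l0 @ [L])" for L
  proof (induction L)
    case 0 thus ?case using zero_step[OF IH0] by simp
  next
    case (Suc L)
    have "\<forall>x\<in>set l0. Suc L \<le> x" using big Suc.prems le_trans by blast
    hence sl: "sorted_wrt (\<ge>) (l0 @ [Suc L])" using s0
      by (auto simp: sorted_wrt_append)
    show ?case by (rule cell_step[OF mu sl Suc.IH]) (use Suc.prems in simp)
  qed
  thus ?case by simp
qed

theorem lemma4p1:
  fixes lam mu :: "nat list"
  assumes "is_partition lam" and "is_partition mu"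
  shows "(\<Prod>(i, j)\<in>diagram mu. (of_int (int j - int i) :: rat poly fract) - indet) *
         (\<Prod>(i, j)\<in>diagram lam.
            ((of_int (int j - int i - int (part mu 1)) :: rat poly fract) + indet) *
            (\<Prod>k\<in>{1..part mu 1}.
               ((of_int (int j - int i + int (conjp mu k) - int k + 1) :: rat poly fract) + indet) /
               ((of_int (int j - int i + int (conjp mu k) - int k) :: rat poly fract) + indet)))
       = (\<Prod>(i, j)\<in>diagram lam. (of_int (ghook lam mu i j) :: rat poly fract) + indet) *
         (\<Prod>(i, j)\<in>diagram mu. (of_int (ghook mu lam i j) :: rat poly fract) - indet)"
proof -
  have "Xm mu * Xl mu lam = Zl mu lam * Zm mu lam"
    using main_sorted assms by (simp add: is_partition_def)
  thus ?thesis unfolding Xm_def Xl_def Zl_def Zm_def Gf_def E_def E'_def .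
qed

end
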